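(* Let $1\le m<n$, $d\in[n]$, and suppose every valuation $v_1,\dots,v_n$ is $d$-self-bounding. Then for every signal profile $\mathbf s$, $\sum_{i=1}^n\mathbb E_{r,\pi}[c^m_i]\le4(d+1)m$. Consequently, with $\eta=4(d+1)$ and $x_i=\mathbb E_{r,\pi}[c^m_i]/\eta$, we have $\sum_{i=1}^nx_i\le m$.
   Context: $n$ bidders, signals $s_i\in S_i\subseteq\mathbb R$, valuations $v_i:\mathbf S\to\mathbb R_{>0}$, $\mathbf S=S_1\times\cdots\times S_n$. Lower estimates $\underline v_j^{(i)}(\mathbf s)=\inf_{o_i\in S_i}v_j(o_i,\mathbf s_{-i})$. $v$ is $d$-self-bounding if $\sum_i(v(\mathbf s)-\inf_{o_i}v(o_i,\mathbf s_{-i}))\le d\,v(\mathbf s)$ for all $\mathbf s$. For $r\in[0,1)$, $w>0$: $f_r(w)=2^{r+k}$ for the integer $k$ with $2^{r+k}\le w<2^{r+k+1}$; $f_r(0)=0$. For a permutation $\pi$ of $[n]$, $a$ associated with bidder $i$ and $b$ with bidder $j$: $a>_\pi b$ iff $a>b$, or $a=b$ and $\pi(i)>\pi(j)$. $c^m_i(r,\pi)=1$ iff $f_r(v_i(\mathbf s))>_\pi f_r(\underline v_j^{(i)}(\mathbf s))$ for at least $n-m$ bidders $j\ne i$, else $0$; $r\sim U[0,1)$, $\pi$ uniform, independent. *)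

theory Defs
  imports "HOL-Analysis.Analysis" "HOL-Combinatorics.Permutations"
begin

text \<open>Bidders are indexed by 0..<n. A signal profile is an element of
  PiE {..<n} S; replacing bidder i signal by x is s(i := x).\<close>

definition lower_est :: "(nat \<Rightarrow> real set) \<Rightarrow> (nat \<Rightarrow> (nat \<Rightarrow> real) \<Rightarrow> real)
    \<Rightarrow> nat \<Rightarrow> nat \<Rightarrow> (nat \<Rightarrow> real) \<Rightarrow> real" where
  "lower_est S v j i s = (INF x\<in>S i. v j (s(i := x)))"

definition self_bounding :: "nat \<Rightarrow> (nat \<Rightarrow> real set) \<Rightarrow> real \<Rightarrow> ((nat \<Rightarrow> real) \<Rightarrow> real) \<Rightarrow> bool" where
  "self_bounding n S d u \<longleftrightarrow>
     (\<forall>s\<in>PiE {..<n} S. (\<Sum>i<n. u s - (INF x\<in>S i. u (s(i := x)))) \<le> d * u s)"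

definition fr :: "real \<Rightarrow> real \<Rightarrow> real" where
  "fr r w = (if w \<le> 0 then 0 else 2 powr (r + of_int \<lfloor>log 2 w - r\<rfloor>))"

definition gt_pi :: "(nat \<Rightarrow> nat) \<Rightarrow> real \<Rightarrow> nat \<Rightarrow> real \<Rightarrow> nat \<Rightarrow> bool" where
  "gt_pi \<pi> a i b j \<longleftrightarrow> a > b \<or> (a = b \<and> \<pi> i > \<pi> j)"

definition cm :: "nat \<Rightarrow> (nat \<Rightarrow> real set) \<Rightarrow> (nat \<Rightarrow> (nat \<Rightarrow> real) \<Rightarrow> real) \<Rightarrow> nat
    \<Rightarrow> (nat \<Rightarrow> real) \<Rightarrow> nat \<Rightarrow> real \<Rightarrow> (nat \<Rightarrow> nat) \<Rightarrow> real" where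
  "cm n S v m s i r \<pi> =
     (if n - m \<le> card {j. j < n \<and> j \<noteq> i \<and>
            gt_pi \<pi> (fr r (v i s)) i (fr r (lower_est S v j i s)) j}
      then 1 else 0)"

definition exp_cm :: "nat \<Rightarrow> (nat \<Rightarrow> real set) \<Rightarrow> (nat \<Rightarrow> (nat \<Rightarrow> real) \<Rightarrow> real) \<Rightarrow> nat
    \<Rightarrow> (nat \<Rightarrow> real) \<Rightarrow> nat \<Rightarrow> real" where
  "exp_cm n S v m s i =
     (\<Sum>\<pi>\<in>{\<pi>. \<pi> permutes {..<n}}. (LINT r:{0..<1}|lborel. cm n S v m s i r \<pi>)) / fact n"

end

theory Submission
  imports Defs
begin

lemma fr_pos: "w > 0 \<Longrightarrow> fr r w > 0"
  by (simp add: fr_def)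

lemma fr_nonneg: "fr r w \<ge> 0"
  by (simp add: fr_def)

lemma fr_le: assumes "w > 0" shows "fr r w \<le> w"
proof -
  have "2 powr (r + of_int \<lfloor>log 2 w - r\<rfloor>) \<le> 2 powr (log 2 w)"
    by (intro powr_mono) linarith+
  thus ?thesis using assms by (simp add: fr_def)
qed

lemma fr_gt: assumes "w > 0" shows "w < 2 * fr r w"
proof -
  have "2 powr (log 2 w) < 2 powr (r + of_int \<lfloor>log 2 w - r\<rfloor> + 1)"
    by (intro powr_less_mono) linarith+
  thus ?thesis using assms by (simp add: fr_def powr_add)
qed

lemma fr_mono: assumes "x \<le> y" shows "fr r x \<le> fr r y"
proof (cases "x \<le> 0")
  case True thus ?thesis by (simp add: fr_def)
next
  case False
  hence "log 2 x \<le> log 2 y" using assms by simp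
  hence "\<lfloor>log 2 x - r\<rfloor> \<le> \<lfloor>log 2 y - r\<rfloor>" by (intro floor_mono) linarith
  hence "2 powr (r + of_int \<lfloor>log 2 x - r\<rfloor>) \<le> 2 powr (r + of_int \<lfloor>log 2 y - r\<rfloor>)"
    by (intro powr_mono) auto
  thus ?thesis using False assms by (simp add: fr_def)
qed

lemma fr_idem: "fr r (fr r w) = fr r w"
proof (cases "w \<le> 0")
  case True thus ?thesis by (simp add: fr_def)
next
  case False
  thus ?thesis by (simp add: fr_def)
qed

lemma fr_sep: assumes "0 \<le> x" "x < fr r y" shows "fr r x < fr r y"
proof (cases "x = 0")
  case True thus ?thesis using assms by (simp add: fr_def)
next
  case False thus ?thesis using assms fr_le[of x r] by linarith
qed

lemma fr_nosep: assumes "x \<le> y" "\<not> x < fr r y" shows "fr r x = fr r y"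
  using fr_mono[OF assms(1), of r] fr_mono[of "fr r y" x r] assms(2) fr_idem[of r y] by linarith

lemma fr_meas[measurable]: "(\<lambda>r. fr r w) \<in> borel_measurable borel"
  unfolding fr_def by measurable


lemma log_chord: assumes "1/2 \<le> t" "t \<le> 1" shows "- log 2 t \<le> 2 * (1 - t)"
proof -
  define \<theta> where "\<theta> = 2*t - 1"
  have th: "0 \<le> \<theta>" "\<theta> \<le> 1" using assms by (auto simp: \<theta>_def)
  have "exp ((1 - \<theta>) *\<^sub>R (- ln 2) + \<theta> *\<^sub>R 0) \<le> (1 - \<theta>) * exp (- ln 2) + \<theta> * exp 0"
    using convex_onD[OF exp_convex th, of "- ln 2" 0] by simp
  also have "\<dots> = t" by (simp add: \<theta>_def exp_minus field_simps)
  finally have "exp ((2*t - 2) * ln 2) \<le> t" by (simp add: \<theta>_def algebra_simps)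
  hence "(2*t - 2) * ln 2 \<le> ln t" using assms
    by (metis exp_le_cancel_iff exp_ln less_le_trans zero_less_divide_1_iff zero_less_numeral)
  hence "2*t - 2 \<le> log 2 t" by (simp add: log_def field_simps)
  thus ?thesis by (simp add: algebra_simps)
qed


lemma sep_set_meas[measurable]: "{r. l < fr r a} \<in> sets borel"
  by measurable

lemma sep_measure:
  assumes l0: "0 \<le> l" and la: "l \<le> a" and a0: "0 < a"
  shows "measure lborel ({0..<1} \<inter> {r. l < fr r a}) \<le> 2 * (1 - l/a)"
proof -
  let ?E = "{0..<1} \<inter> {r. l < fr r a}"
  have Es: "?E \<in> sets lborel" by simp
  have E1: "measure lborel ?E \<le> 1"
  proof -
    have "measure lborel ?E \<le> measure lborel {0..1::real}"
      by (intro measure_mono_fmeasurable) (auto intro: fmeasurable_compact)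
    thus ?thesis by simp
  qed
  show ?thesis
  proof (cases "l \<le> a/2")
    case True
    hence "1 \<le> 2 * (1 - l/a)" using a0 by (simp add: field_simps)
    thus ?thesis using E1 by linarith
  next
    case False
    hence lpos: "l > 0" using a0 by linarith
    define x where "x = log 2 a"
    define L where "L = log 2 l"
    define p where "p = \<lfloor>x\<rfloor>"
    define c where "c = x - p"
    define z where "z = x - L"
    have c01: "0 \<le> c" "c < 1" unfolding c_def p_def by linarith+
    have z0: "0 \<le> z" using la lpos by (simp add: z_def x_def L_def)
    have z1: "z < 1"
    proof -
      have "L > log 2 (a/2)" using False lpos a0 unfolding L_def by (subst log_less_cancel_iff) auto
      also have "log 2 (a/2) = x - 1" using a0 by (simp add: x_def log_divide)
      finally show ?thesis by (simp add: z_def)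
    qed
    have mem: "c - z < r \<and> r \<le> c \<or> c - z + 1 < r" if "r \<in> ?E" for r
    proof -
      have r01: "0 \<le> r" "r < 1" using that by auto
      have "l < 2 powr (r + of_int \<lfloor>log 2 a - r\<rfloor>)" using that a0 by (simp add: fr_def)
      hence "log 2 l < log 2 (2 powr (r + of_int \<lfloor>log 2 a - r\<rfloor>))" using lpos
        by (subst log_less_cancel_iff) auto
      hence "L < r + of_int \<lfloor>x - r\<rfloor>" unfolding L_def x_def by simp
      moreover have "\<lfloor>x - r\<rfloor> = p \<or> \<lfloor>x - r\<rfloor> = p - 1" unfolding p_def using r01
        by linarith
      moreover have "\<lfloor>x - r\<rfloor> = p \<Longrightarrow> r \<le> c" unfolding c_def p_def using r01 by linarith
      ultimately show ?thesis unfolding c_def z_def by auto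
    qed
    have "measure lborel ?E \<le> z"
    proof (cases "z \<le> c")
      case True
      have "?E \<subseteq> {c - z .. c}" using mem True c01 by fastforce
      hence "measure lborel ?E \<le> measure lborel {c - z .. c}"
        by (intro measure_mono_fmeasurable) (auto intro: fmeasurable_compact)
      thus ?thesis using z0 by simp
    next
      case False
      have "?E \<subseteq> {0 .. c} \<union> {c - z + 1 .. 1}" using mem by fastforce
      hence "measure lborel ?E \<le> measure lborel ({0 .. c} \<union> {c - z + 1 .. 1})"
        by (intro measure_mono_fmeasurable) (auto intro: fmeasurable_compact)
      also have "\<dots> \<le> measure lborel {0 .. c} + measure lborel {c - z + 1 .. 1}"
        by (intro measure_Un_le) auto
      finally show ?thesis using c01 False z1 by simp
    qed
    also have "z = - log 2 (l/a)" using lpos a0 by (simp add: z_def x_def L_def log_divide)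
    also have "\<dots> \<le> 2 * (1 - l/a)"
      using False la a0 by (intro log_chord) (auto simp: field_simps)
    finally show ?thesis .
  qed
qed

lemma sep_integrable:
  "set_integrable lborel {0..<1::real} (\<lambda>r. of_bool (l < fr r a) :: real)"
  unfolding set_integrable_def
  by (intro integrableI_bounded_set_indicator[where B=1]) auto

lemma sep_integral:
  assumes "0 \<le> l" "l \<le> a" "0 < a"
  shows "(LINT r:{0..<1}|lborel. (of_bool (l < fr r a) :: real)) \<le> 2 * (1 - l/a)"
proof -
  have "(LINT r:{0..<1}|lborel. (of_bool (l < fr r a) :: real))
      = integral\<^sup>L lborel (indicator ({0..<1} \<inter> {r. l < fr r a}))"
    unfolding set_lebesgue_integral_def
    by (intro Bochner_Integration.integral_cong) (auto simp: indicator_def)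
  also have "\<dots> = measure lborel ({0..<1} \<inter> {r. l < fr r a})"
    by (simp add: integral_indicator)
  finally show ?thesis using sep_measure[OF assms] by simp
qed


definition topk :: "nat set \<Rightarrow> (nat \<Rightarrow> nat) \<Rightarrow> nat \<Rightarrow> nat \<Rightarrow> bool" where
  "topk Z \<pi> k j \<longleftrightarrow> card {j'\<in>Z. j' \<noteq> j \<and> \<pi> j' > \<pi> j} < k"

lemma topk_card:
  assumes "finite Z" "inj_on \<pi> Z"
  shows "card {j\<in>Z. topk Z \<pi> k j} \<le> k"
proof (rule ccontr)
  assume "\<not> ?thesis"
  hence big: "card {j\<in>Z. topk Z \<pi> k j} > k" by simp
  define T where "T = {j\<in>Z. topk Z \<pi> k j}"
  have fT: "finite T" using assms(1) by (simp add: T_def)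
  have ne: "T \<noteq> {}" using big unfolding T_def by (metis card.empty less_nat_zero_code)
  obtain j0 where j0: "j0 \<in> T" "\<pi> j0 = Min (\<pi> ` T)"
    using Min_in[of "\<pi> ` T"] fT ne by (metis (no_types, lifting) finite_imageI image_iff image_is_empty)
  have "T - {j0} \<subseteq> {j'\<in>Z. j' \<noteq> j0 \<and> \<pi> j' > \<pi> j0}"
  proof
    fix j assume j: "j \<in> T - {j0}"
    have "\<pi> j0 \<le> \<pi> j" using j j0 fT by simp
    moreover have "\<pi> j \<noteq> \<pi> j0" using j j0 assms(2) unfolding T_def inj_on_def by blast
    ultimately show "j \<in> {j'\<in>Z. j' \<noteq> j0 \<and> \<pi> j' > \<pi> j0}" using j by (auto simp: T_def)
  qed
  hence "card (T - {j0}) \<le> card {j'\<in>Z. j' \<noteq> j0 \<and> \<pi> j' > \<pi> j0}"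
    by (intro card_mono) (use assms(1) in auto)
  moreover have "card (T - {j0}) = card T - 1" using j0 fT by simp
  moreover have "topk Z \<pi> k j0" using j0 by (simp add: T_def)
  ultimately show False using big unfolding topk_def T_def by linarith
qed

lemma topk_swap:
  assumes "i \<in> Z" "j \<in> Z"
  shows "topk Z (\<pi> \<circ> Transposition.transpose i j) k i = topk Z \<pi> k j"
proof -
  let ?t = "Transposition.transpose i j"
  have "?t ` {j'\<in>Z. j' \<noteq> i \<and> (\<pi> \<circ> ?t) j' > (\<pi> \<circ> ?t) i} = {j'\<in>Z. j' \<noteq> j \<and> \<pi> j' > \<pi> j}"
  proof (intro equalityI subsetI)
    fix x assume "x \<in> ?t ` {j'\<in>Z. j' \<noteq> i \<and> (\<pi> \<circ> ?t) j' > (\<pi> \<circ> ?t) i}"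
    then obtain y where y: "y \<in> Z" "y \<noteq> i" "\<pi> (?t y) > \<pi> j" "x = ?t y" by auto
    have ty: "?t y = (if y = j then i else y)" using y(2) by (simp add: Transposition.transpose_def)
    show "x \<in> {j'\<in>Z. j' \<noteq> j \<and> \<pi> j' > \<pi> j}"
    proof (cases "y = j")
      case True thus ?thesis using y ty assms by auto
    next
      case False thus ?thesis using y ty assms by auto
    qed
  next
    fix x assume x: "x \<in> {j'\<in>Z. j' \<noteq> j \<and> \<pi> j' > \<pi> j}"
    have tx: "?t x = (if x = i then j else x)" using x by (simp add: Transposition.transpose_def)
    have "?t x \<in> {j'\<in>Z. j' \<noteq> i \<and> (\<pi> \<circ> ?t) j' > (\<pi> \<circ> ?t) i}"
    proof (cases "x = i")
      case True thus ?thesis using x tx assms by auto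
    next
      case False thus ?thesis using x tx assms by auto
    qed
    moreover have "x = ?t (?t x)" by simp
    ultimately show "x \<in> ?t ` {j'\<in>Z. j' \<noteq> i \<and> (\<pi> \<circ> ?t) j' > (\<pi> \<circ> ?t) i}" by blast
  qed
  moreover have injt: "inj ?t"
  proof (rule injI)
    fix x y assume "?t x = ?t y"
    hence "?t (?t x) = ?t (?t y)" by simp
    thus "x = y" by simp
  qed
  have "card (?t ` {j'\<in>Z. j' \<noteq> i \<and> (\<pi> \<circ> ?t) j' > (\<pi> \<circ> ?t) i}) = card {j'\<in>Z. j' \<noteq> i \<and> (\<pi> \<circ> ?t) j' > (\<pi> \<circ> ?t) i}"
    by (rule card_image) (rule inj_on_subset[OF injt], simp)
  ultimately have "card {j'\<in>Z. j' \<noteq> i \<and> (\<pi> \<circ> ?t) j' > (\<pi> \<circ> ?t) i} = card {j'\<in>Z. j' \<noteq> j \<and> \<pi> j' > \<pi> j}"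
    by simp
  thus ?thesis unfolding topk_def by simp
qed

lemma card_filter_sum: "finite A \<Longrightarrow> real (card {x\<in>A. P x}) = (\<Sum>x\<in>A. of_bool (P x))"
  by (subst sum_of_bool_eq) (auto intro!: arg_cong[where f=card])

lemma topk_perm_count:
  assumes Z: "Z \<subseteq> {..<n}" and i: "i \<in> Z"
  shows "real (card {\<pi>. \<pi> permutes {..<n} \<and> topk Z \<pi> k i}) * real (card Z) \<le> real k * fact n"
proof -
  define P where "P = {\<pi>. \<pi> permutes {..<n}}"
  have fP: "finite P" unfolding P_def by (simp add: finite_permutations)
  have cP: "card P = fact n" unfolding P_def by (simp add: card_permutations)
  have fZ: "finite Z" using Z finite_subset by blast
  have eq: "card {\<pi>\<in>P. topk Z \<pi> k i} = card {\<pi>\<in>P. topk Z \<pi> k j}" if j: "j \<in> Z" for j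
  proof -
    let ?t = "Transposition.transpose i j"
    have tp: "?t permutes {..<n}" using Z i j by (intro permutes_swap_id) auto
    have "(\<lambda>\<pi>. \<pi> \<circ> ?t) ` {\<pi>\<in>P. topk Z \<pi> k j} = {\<pi>\<in>P. topk Z \<pi> k i}"
    proof (intro equalityI subsetI)
      fix x assume "x \<in> (\<lambda>\<pi>. \<pi> \<circ> ?t) ` {\<pi>\<in>P. topk Z \<pi> k j}"
      then obtain \<pi> where "\<pi> \<in> P" "topk Z \<pi> k j" "x = \<pi> \<circ> ?t" by auto
      thus "x \<in> {\<pi>\<in>P. topk Z \<pi> k i}" using tp topk_swap[OF i j] unfolding P_def
        by (auto intro: permutes_compose)
    next
      fix x assume x: "x \<in> {\<pi>\<in>P. topk Z \<pi> k i}"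
      have "x \<circ> ?t \<in> {\<pi>\<in>P. topk Z \<pi> k j}"
      proof -
        have "topk Z (x \<circ> ?t \<circ> ?t) k i" using x by (simp add: comp_assoc)
        hence "topk Z (x \<circ> ?t) k j" using topk_swap[OF i j, of "x \<circ> ?t" k] by simp
        thus ?thesis using x tp unfolding P_def by (auto intro: permutes_compose)
      qed
      moreover have "x = (x \<circ> ?t) \<circ> ?t" by (simp add: comp_assoc)
      ultimately show "x \<in> (\<lambda>\<pi>. \<pi> \<circ> ?t) ` {\<pi>\<in>P. topk Z \<pi> k j}" by blast
    qed
    moreover have injc: "inj (\<lambda>\<pi>::nat\<Rightarrow>nat. \<pi> \<circ> ?t)"
    proof (rule injI)
      fix x y :: "nat \<Rightarrow> nat" assume "x \<circ> ?t = y \<circ> ?t"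
      hence "x \<circ> ?t \<circ> ?t = y \<circ> ?t \<circ> ?t" by simp
      thus "x = y" by (simp add: comp_assoc)
    qed
    have "card ((\<lambda>\<pi>. \<pi> \<circ> ?t) ` {\<pi>\<in>P. topk Z \<pi> k j}) = card {\<pi>\<in>P. topk Z \<pi> k j}"
      by (rule card_image) (rule inj_on_subset[OF injc], simp)
    ultimately show ?thesis by simp
  qed
  have "real (card {\<pi>\<in>P. topk Z \<pi> k i}) * real (card Z) = (\<Sum>j\<in>Z. real (card {\<pi>\<in>P. topk Z \<pi> k i}))"
    by (simp add: sum_constant mult.commute)
  also have "\<dots> = (\<Sum>j\<in>Z. real (card {\<pi>\<in>P. topk Z \<pi> k j}))"
  proof (rule sum.cong[OF refl])
    fix j assume "j \<in> Z"
    from eq[OF this] show "real (card {\<pi>\<in>P. topk Z \<pi> k i}) = real (card {\<pi>\<in>P. topk Z \<pi> k j})"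
      by (rule arg_cong)
  qed
  also have "\<dots> = (\<Sum>j\<in>Z. \<Sum>\<pi>\<in>P. of_bool (topk Z \<pi> k j))"
    using fP by (intro sum.cong refl card_filter_sum)
  also have "\<dots> = (\<Sum>\<pi>\<in>P. \<Sum>j\<in>Z. of_bool (topk Z \<pi> k j))" by (rule sum.swap)
  also have "\<dots> = (\<Sum>\<pi>\<in>P. real (card {j\<in>Z. topk Z \<pi> k j}))"
    using fZ by (intro sum.cong refl card_filter_sum[symmetric])
  also have "\<dots> \<le> (\<Sum>\<pi>\<in>P. real k)"
  proof (intro sum_mono)
    fix \<pi> assume "\<pi> \<in> P"
    hence "inj_on \<pi> Z" unfolding P_def by (metis mem_Collect_eq permutes_inj_on)
    thus "real (card {j\<in>Z. topk Z \<pi> k j}) \<le> real k" using topk_card[OF fZ] by simp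
  qed
  also have "\<dots> = real k * fact n" using cP by simp
  finally show ?thesis by (simp add: P_def)
qed


definition hw :: "nat \<Rightarrow> real" where "hw t = 1 / real t - 1 / real (t + 1)"

lemma hw_eq: "t > 0 \<Longrightarrow> hw t = 1 / (real t * real (t+1))"
  unfolding hw_def by (simp add: field_simps)

lemma hw_nonneg: "t > 0 \<Longrightarrow> hw t \<ge> 0"
  by (simp add: hw_eq)

lemma hw_mono: assumes "0 < s" "s \<le> t" shows "hw t \<le> hw s"
proof -
  have "real s * real (s+1) \<le> real t * real (t+1)" using assms by (intro mult_mono) auto
  thus ?thesis using assms by (simp add: hw_eq frac_le)
qed

lemma hw_sum_upper: "(\<Sum>t\<in>{1..N}. hw t) = 1 - 1 / real (N+1)"
  by (induction N) (auto simp: hw_def)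

lemma hw_sum_le1: assumes "R \<subseteq> {1..N}" shows "(\<Sum>t\<in>R. hw t) \<le> 1"
proof -
  have "(\<Sum>t\<in>R. hw t) \<le> (\<Sum>t\<in>{1..N}. hw t)"
    using assms by (intro sum_mono2) (auto simp: hw_nonneg)
  also have "\<dots> = 1 - 1 / real (N+1)" by (rule hw_sum_upper)
  also have "\<dots> \<le> 1" by simp
  finally show ?thesis .
qed

lemma hw_sum_lower:
  assumes "R \<subseteq> {1..\<beta>}"
  shows "1 / real (\<beta> - card R + 1) - 1 / real (\<beta> + 1) \<le> (\<Sum>t\<in>R. hw t)"
  using assms
proof (induction \<beta> arbitrary: R)
  case 0 thus ?case by simp
next
  case (Suc b)
  have fR: "finite R" using Suc.prems finite_subset by blast
  have cR: "card R \<le> Suc b" using card_mono[OF _ Suc.prems] by simp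
  show ?case
  proof (cases "Suc b \<in> R")
    case False
    hence R': "R \<subseteq> {1..b}" using Suc.prems by (auto simp: subset_iff le_Suc_eq)
    have cR': "card R \<le> b" using card_mono[OF _ R'] by simp
    have IH: "1 / real (b - card R + 1) - 1 / real (b + 1) \<le> (\<Sum>t\<in>R. hw t)" using Suc.IH[OF R'] .
    have "hw (Suc b) \<le> hw (b - card R + 1)" by (intro hw_mono) (use cR' in auto)
    hence "1 / real (Suc b - card R + 1) - 1 / real (Suc b + 1) \<le> 1 / real (b - card R + 1) - 1 / real (b + 1)"
      using cR' by (simp add: hw_def Suc_diff_le)
    thus ?thesis using IH by linarith
  next
    case True
    define R' where "R' = R - {Suc b}"
    have R': "R' \<subseteq> {1..b}" using Suc.prems by (auto simp: R'_def)
    have cR': "card R' = card R - 1" using True fR by (simp add: R'_def)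
    have c1: "card R \<ge> 1" using True fR by (auto simp: Suc_le_eq card_gt_0_iff)
    have IH: "1 / real (b - card R' + 1) - 1 / real (b + 1) \<le> (\<Sum>t\<in>R'. hw t)" using Suc.IH[OF R'] .
    have "(\<Sum>t\<in>R. hw t) = hw (Suc b) + (\<Sum>t\<in>R'. hw t)"
      using True fR unfolding R'_def by (simp add: sum.remove)
    moreover have "b - card R' + 1 = Suc b - card R + 1" using cR' c1 cR by simp
    ultimately show ?thesis using IH by (simp add: hw_def)
  qed
qed

lemma exists_rank:
  fixes a :: "nat \<Rightarrow> real"
  obtains \<sigma> where "bij_betw \<sigma> {..<n} {..<n}" "\<And>t t'. t \<le> t' \<Longrightarrow> t' < n \<Longrightarrow> a (\<sigma> t') \<le> a (\<sigma> t)"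
proof -
  define xs where "xs = sort_key (\<lambda>j. - a j) [0..<n]"
  have dxs: "distinct xs" unfolding xs_def by simp
  have sxs: "set xs = {..<n}" unfolding xs_def by auto
  have lxs: "length xs = n" unfolding xs_def by simp
  have srt: "sorted (map (\<lambda>j. - a j) xs)" unfolding xs_def by (rule sorted_sort_key)
  have "bij_betw ((!) xs) {..<n} {..<n}" using bij_betw_nth[OF dxs] lxs sxs by simp
  moreover have "a (xs ! t') \<le> a (xs ! t)" if "t \<le> t'" "t' < n" for t t'
  proof -
    have "map (\<lambda>j. - a j) xs ! t \<le> map (\<lambda>j. - a j) xs ! t'"
      using sorted_nth_mono[OF srt] that lxs by simp
    thus ?thesis using that lxs by simp
  qed
  ultimately show ?thesis using that by blast
qed


locale auc =
  fixes n m :: nat and d :: real and a :: "nat \<Rightarrow> real" and l :: "nat \<Rightarrow> nat \<Rightarrow> real"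
    and \<sigma> :: "nat \<Rightarrow> nat"
  assumes m1: "1 \<le> m" and mn: "m < n"
    and apos: "\<And>j. j < n \<Longrightarrow> 0 < a j"
    and l0: "\<And>i j. i < n \<Longrightarrow> j < n \<Longrightarrow> 0 \<le> l j i"
    and la: "\<And>i j. i < n \<Longrightarrow> j < n \<Longrightarrow> l j i \<le> a j"
    and sb: "\<And>j. j < n \<Longrightarrow> (\<Sum>i<n. a j - l j i) \<le> d * a j"
    and d0: "0 \<le> d"
    and sbij: "bij_betw \<sigma> {..<n} {..<n}"
    and smono: "\<And>t t'. t \<le> t' \<Longrightarrow> t' < n \<Longrightarrow> a (\<sigma> t') \<le> a (\<sigma> t)"
begin

definition "\<rho> = inv_into {..<n} \<sigma>"
definition "Q = \<sigma> ` {..<m}"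
definition "q = \<sigma> (m - 1)"
definition "c i r \<pi> = (if n - m \<le> card {j. j < n \<and> j \<noteq> i \<and> gt_pi \<pi> (fr r (a i)) i (fr r (l j i)) j} then 1 else 0 :: real)"
definition "sep r j i \<longleftrightarrow> l j i < fr r (a j)"
definition "w j = hw (\<rho> j - m + 1)"

lemma \<sigma>_lt: "t < n \<Longrightarrow> \<sigma> t < n"
  using bij_betw_apply[OF sbij, of t] by simp

lemma \<rho>_lt: "j < n \<Longrightarrow> \<rho> j < n"
  using bij_betw_apply[OF bij_betw_inv_into[OF sbij], of j] unfolding \<rho>_def by simp

lemma \<sigma>\<rho>: "j < n \<Longrightarrow> \<sigma> (\<rho> j) = j"
  using sbij unfolding \<rho>_def by (simp add: bij_betw_inv_into_right)

lemma \<rho>\<sigma>: "t < n \<Longrightarrow> \<rho> (\<sigma> t) = t"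
  using sbij unfolding \<rho>_def by (simp add: bij_betw_inv_into_left)

lemma \<sigma>_inj: assumes "t < n" "t' < n" "\<sigma> t = \<sigma> t'" shows "t = t'"
proof -
  have "\<rho> (\<sigma> t) = \<rho> (\<sigma> t')" using assms(3) by simp
  thus ?thesis using \<rho>\<sigma> assms(1,2) by simp
qed

lemma Q_sub: "Q \<subseteq> {..<n}"
  using mn \<sigma>_lt by (auto simp: Q_def)

lemma card_Q: "card Q = m"
proof -
  have "inj_on \<sigma> {..<m}"
  proof (rule inj_onI)
    fix x y assume "x \<in> {..<m}" "y \<in> {..<m}" "\<sigma> x = \<sigma> y"
    thus "x = y" using \<sigma>_inj[of x y] mn by simp
  qed
  thus ?thesis by (simp add: Q_def card_image)
qed

lemma finite_Q: "finite Q" by (simp add: Q_def)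

lemma q_Q: "q \<in> Q" using m1 by (auto simp: Q_def q_def)

lemma nonQ_rho: assumes "j < n" "j \<notin> Q" shows "m \<le> \<rho> j"
proof (rule ccontr)
  assume "\<not> m \<le> \<rho> j"
  hence "j \<in> Q" using \<sigma>\<rho>[OF assms(1)] unfolding Q_def by (metis image_eqI lessThan_iff not_le)
  thus False using assms by simp
qed

lemma Q_ge: assumes "k \<in> Q" "j < n" "j \<notin> Q" shows "a j \<le> a k"
proof -
  obtain t where t: "t < m" "k = \<sigma> t" using assms(1) by (auto simp: Q_def)
  have "t \<le> \<rho> j" using t nonQ_rho[OF assms(2,3)] by simp
  hence "a (\<sigma> (\<rho> j)) \<le> a (\<sigma> t)" using smono \<rho>_lt[OF assms(2)] by blast
  thus ?thesis using t \<sigma>\<rho>[OF assms(2)] by simp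
qed

lemma q_le: assumes "k \<in> Q" shows "a q \<le> a k"
proof -
  obtain t where t: "t < m" "k = \<sigma> t" using assms(1) by (auto simp: Q_def)
  show ?thesis unfolding q_def t(2) using t mn by (intro smono) auto
qed

lemma nonQ_le_q: assumes "j < n" "j \<notin> Q" shows "a j \<le> a q"
  using Q_ge[OF q_Q assms] .

lemma q_lt: "q < n" using q_Q Q_sub by auto

lemma a_pos_q: "0 < a q" using apos q_lt by simp

lemma win_bound:
  fixes r :: real
  assumes i: "i < n" and \<pi>: "\<pi> permutes {..<n}"
  defines "g \<equiv> fr r (a q)"
  defines "K \<equiv> {k\<in>Q. fr r (a k) = g}"
  defines "A \<equiv> {j. j < n \<and> j \<notin> Q \<and> fr r (a j) = g}"
  defines "Z \<equiv> insert i (K \<union> {j\<in>A. j \<noteq> i \<and> \<not> sep r j i})"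
  shows "c i r \<pi> \<le> of_bool (i \<in> Q) + (\<Sum>k\<in>Q. of_bool (sep r k i)) + of_bool (i \<in> A \<and> topk Z \<pi> (card K) i)"
proof -
  have nn: "0 \<le> of_bool (i \<in> Q) + (\<Sum>k\<in>Q. of_bool (sep r k i)) + (of_bool (i \<in> A \<and> topk Z \<pi> (card K) i) :: real)"
    by (intro add_nonneg_nonneg sum_nonneg) auto
  show ?thesis
  proof (cases "c i r \<pi> = 0")
    case True thus ?thesis using nn by simp
  next
    case False
    define Bt where "Bt = {j. j < n \<and> j \<noteq> i \<and> gt_pi \<pi> (fr r (a i)) i (fr r (l j i)) j}"
    have cBt: "n - m \<le> card Bt" using False by (auto simp: c_def Bt_def split: if_splits)
    show ?thesis
    proof (cases "i \<in> Q \<or> (\<exists>k\<in>Q. sep r k i)")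
      case True
      have "1 \<le> of_bool (i \<in> Q) + (\<Sum>k\<in>Q. (of_bool (sep r k i) :: real))"
      proof (cases "i \<in> Q")
        case True thus ?thesis by (simp add: sum_nonneg)
      next
        case False
        then obtain k where k: "k \<in> Q" "sep r k i" using \<open>i \<in> Q \<or> (\<exists>k\<in>Q. sep r k i)\<close> by blast
        have "(of_bool (sep r k i) :: real) \<le> (\<Sum>k\<in>Q. of_bool (sep r k i))"
          by (rule member_le_sum) (use k finite_Q in auto)
        thus ?thesis using k by simp
      qed
      moreover have "c i r \<pi> \<le> 1" by (simp add: c_def)
      moreover have "0 \<le> (of_bool (i \<in> A \<and> topk Z \<pi> (card K) i) :: real)" by simp
      ultimately show ?thesis by linarith
    next
      case False
      hence iQ: "i \<notin> Q" and nosep: "\<And>k. k \<in> Q \<Longrightarrow> \<not> sep r k i" by auto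
      have fQ: "\<And>k. k \<in> Q \<Longrightarrow> fr r (l k i) = fr r (a k)"
        using nosep fr_nosep la Q_sub i unfolding sep_def by blast
      have aik: "\<And>k. k \<in> Q \<Longrightarrow> fr r (a i) \<le> fr r (a k)"
        using Q_ge[OF _ i iQ] fr_mono by blast
      have "\<exists>k\<in>Q. k \<in> Bt"
      proof (rule ccontr)
        assume "\<not> ?thesis"
        hence "Bt \<subseteq> ({..<n} - {i}) - Q" by (auto simp: Bt_def)
        hence "card Bt \<le> card (({..<n} - {i}) - Q)" by (intro card_mono) auto
        also have "\<dots> = card ({..<n} - {i}) - card Q"
          using Q_sub iQ by (intro card_Diff_subset) (auto simp: finite_Q)
        also have "\<dots> = n - 1 - m" using i card_Q by simp
        finally show False using cBt mn by linarith
      qed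
      then obtain k where k: "k \<in> Q" "k \<in> Bt" by blast
      have "gt_pi \<pi> (fr r (a i)) i (fr r (l k i)) k" using k by (simp add: Bt_def)
      hence eqk: "fr r (a i) = fr r (a k)" using fQ[OF k(1)] aik[OF k(1)] by (auto simp: gt_pi_def)
      have "fr r (a i) \<le> g" unfolding g_def by (rule fr_mono[OF nonQ_le_q[OF i iQ]])
      moreover have "g \<le> fr r (a k)" unfolding g_def by (rule fr_mono[OF q_le[OF k(1)]])
      ultimately have gi: "fr r (a i) = g" using eqk by linarith
      have iA: "i \<in> A" using i iQ gi by (simp add: A_def)
      define Fl where "Fl = ({..<n} - {i}) - Bt"
      have cFl: "card Fl \<le> m - 1"
      proof -
        have "card Fl = card ({..<n} - {i}) - card Bt"
          unfolding Fl_def by (intro card_Diff_subset) (auto simp: Bt_def)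
        thus ?thesis using cBt i by simp
      qed
      define X1 where "X1 = Q - K"
      define X2 where "X2 = {j\<in>Z. j \<noteq> i \<and> \<pi> j > \<pi> i}"
      have KQ: "K \<subseteq> Q" by (auto simp: K_def)
      have X1F: "X1 \<subseteq> Fl"
      proof
        fix k assume kX: "k \<in> X1"
        hence kQ: "k \<in> Q" and kK: "fr r (a k) \<noteq> g" by (auto simp: X1_def K_def)
        have "g \<le> fr r (a k)" unfolding g_def using q_le[OF kQ] fr_mono by blast
        hence "fr r (a k) > fr r (a i)" using kK gi by linarith
        hence "\<not> gt_pi \<pi> (fr r (a i)) i (fr r (l k i)) k" using fQ[OF kQ] by (auto simp: gt_pi_def)
        thus "k \<in> Fl" using kQ Q_sub iQ by (auto simp: Fl_def Bt_def)
      qed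
      have X2F: "X2 \<subseteq> Fl"
      proof
        fix j assume jX: "j \<in> X2"
        hence jZ: "j \<in> Z" and ji: "j \<noteq> i" and pj: "\<pi> j > \<pi> i" by (auto simp: X2_def)
        have jKA: "j \<in> K \<or> (j \<in> A \<and> \<not> sep r j i)" using jZ ji unfolding Z_def by blast
        have jn: "j < n" and fj: "fr r (l j i) = fr r (a i)"
        proof -
          show "j < n"
          proof (cases "j \<in> K")
            case True hence "j \<in> Q" using KQ by blast
            thus ?thesis using Q_sub by blast
          next
            case False thus ?thesis using jKA unfolding A_def by blast
          qed
          show "fr r (l j i) = fr r (a i)"
          proof (cases "j \<in> K")
            case True hence jQ: "j \<in> Q" and jg: "fr r (a j) = g" unfolding K_def by blast+
            show ?thesis using fQ[OF jQ] jg gi by simp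
          next
            case False
            hence jA: "j \<in> A" and ns: "\<not> sep r j i" using jKA by blast+
            have jn': "j < n" and jg: "fr r (a j) = g" using jA unfolding A_def by blast+
            have "fr r (l j i) = fr r (a j)"
              by (rule fr_nosep[OF la[OF i jn']]) (use ns in \<open>simp add: sep_def\<close>)
            thus ?thesis using gi jg by simp
          qed
        qed
        have "\<not> gt_pi \<pi> (fr r (a i)) i (fr r (l j i)) j" using fj pj by (auto simp: gt_pi_def)
        thus "j \<in> Fl" using jn ji by (auto simp: Fl_def Bt_def)
      qed
      have disj: "X1 \<inter> X2 = {}"
      proof -
        have "X2 \<subseteq> K \<union> A" by (auto simp: X2_def Z_def)
        moreover have "A \<inter> Q = {}" by (auto simp: A_def)
        ultimately show ?thesis by (auto simp: X1_def)
      qed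
      have fF: "finite Fl" by (simp add: Fl_def)
      have "card X1 + card X2 = card (X1 \<union> X2)"
        using disj fF X1F X2F by (intro card_Un_disjoint[symmetric]) (auto intro: finite_subset)
      also have "\<dots> \<le> card Fl" using X1F X2F fF by (intro card_mono) auto
      finally have s: "card X1 + card X2 \<le> m - 1" using cFl by linarith
      have "card X1 = m - card K" unfolding X1_def
        using KQ finite_Q card_Q by (simp add: card_Diff_subset finite_subset)
      moreover have "card K \<le> m" using KQ card_Q finite_Q card_mono by metis
      ultimately have "card X2 < card K" using s m1 by linarith
      hence "topk Z \<pi> (card K) i" by (simp add: topk_def X2_def)
      hence "c i r \<pi> \<le> of_bool (i \<in> A \<and> topk Z \<pi> (card K) i)" using iA by (simp add: c_def)
      moreover have "0 \<le> of_bool (i \<in> Q) + (\<Sum>k\<in>Q. (of_bool (sep r k i) :: real))" by (simp add: sum_nonneg)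
      ultimately show ?thesis by linarith
    qed
  qed
qed

end

context auc begin

definition "gg r = fr r (a q)"
definition "KK r = {k\<in>Q. fr r (a k) = gg r}"
definition "AA r = {j. j < n \<and> j \<notin> Q \<and> fr r (a j) = gg r}"
definition "NN r i = {j\<in>AA r. j \<noteq> i \<and> \<not> sep r j i}"
definition "CC r i = {j\<in>AA r. j \<noteq> i \<and> sep r j i}"
definition "ZZ r i = insert i (KK r \<union> NN r i)"

lemma win_bound':
  assumes "i < n" "\<pi> permutes {..<n}"
  shows "c i r \<pi> \<le> of_bool (i \<in> Q) + (\<Sum>k\<in>Q. of_bool (sep r k i)) + of_bool (i \<in> AA r \<and> topk (ZZ r i) \<pi> (card (KK r)) i)"
  unfolding ZZ_def NN_def AA_def KK_def gg_def by (rule win_bound[OF assms])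

lemma KK_sub: "KK r \<subseteq> Q" by (auto simp: KK_def)
lemma finite_KK: "finite (KK r)" using finite_subset[OF KK_sub finite_Q] .
lemma KK_ge1: "1 \<le> card (KK r)"
proof -
  have "q \<in> KK r" using q_Q by (simp add: KK_def gg_def)
  thus ?thesis using finite_KK by (metis One_nat_def Suc_leI card_gt_0_iff empty_iff)
qed
lemma KK_lem: "card (KK r) \<le> m" using card_mono[OF finite_Q KK_sub] card_Q by simp

lemma AA_sub: "AA r \<subseteq> {..<n}" by (auto simp: AA_def)
lemma finite_AA: "finite (AA r)" using finite_subset[OF AA_sub] by simp
lemma AA_Q: "AA r \<inter> Q = {}" by (auto simp: AA_def)

lemma ZZ_sub: assumes "i < n" shows "ZZ r i \<subseteq> {..<n}"
  using assms KK_sub Q_sub by (auto simp: ZZ_def NN_def AA_def)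

lemma ZZ_card: assumes "i \<in> AA r" shows "card (ZZ r i) = card (KK r) + card (NN r i) + 1"
proof -
  have fN: "finite (NN r i)" using finite_AA by (simp add: NN_def)
  have d1: "KK r \<inter> NN r i = {}" using AA_Q KK_sub by (auto simp: NN_def)
  have "i \<notin> KK r" using assms AA_Q KK_sub by blast
  moreover have "i \<notin> NN r i" by (simp add: NN_def)
  ultimately have "card (ZZ r i) = Suc (card (KK r \<union> NN r i))"
    unfolding ZZ_def using finite_KK fN by simp
  also have "card (KK r \<union> NN r i) = card (KK r) + card (NN r i)"
    by (rule card_Un_disjoint[OF finite_KK fN d1])
  finally show ?thesis by simp
qed

lemma CN_card: assumes "i \<in> AA r" shows "card (CC r i) + card (NN r i) + 1 = card (AA r)"
proof -
  have "AA r = insert i (CC r i \<union> NN r i)" using assms by (auto simp: CC_def NN_def)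
  moreover have "CC r i \<inter> NN r i = {}" by (auto simp: CC_def NN_def)
  moreover have "i \<notin> CC r i \<union> NN r i" by (auto simp: CC_def NN_def)
  moreover have "finite (CC r i)" "finite (NN r i)" using finite_AA by (auto simp: CC_def NN_def)
  ultimately show ?thesis by (simp add: card_Un_disjoint)
qed

lemma \<rho>_inj: "j < n \<Longrightarrow> j' < n \<Longrightarrow> \<rho> j = \<rho> j' \<Longrightarrow> j = j'"
  by (metis \<sigma>\<rho>)

lemma rank_A: assumes jA: "j \<in> AA r" shows "m \<le> \<rho> j" "\<rho> j - m + 1 \<le> card (AA r)"
proof -
  have jn: "j < n" and jQ: "j \<notin> Q" and jg: "fr r (a j) = gg r" using jA by (auto simp: AA_def)
  show m: "m \<le> \<rho> j" by (rule nonQ_rho[OF jn jQ])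
  have \<rho>n: "\<rho> j < n" by (rule \<rho>_lt[OF jn])
  have sub: "\<sigma> ` {m..\<rho> j} \<subseteq> AA r"
  proof
    fix x assume "x \<in> \<sigma> ` {m..\<rho> j}"
    then obtain t where t: "m \<le> t" "t \<le> \<rho> j" "x = \<sigma> t" by auto
    have tn: "t < n" using t \<rho>n by simp
    have xn: "x < n" using \<sigma>_lt[OF tn] t by simp
    have xQ: "x \<notin> Q"
    proof
      assume "x \<in> Q"
      then obtain t' where "t' < m" "x = \<sigma> t'" by (auto simp: Q_def)
      hence "t = t'" using \<sigma>_inj[of t t'] tn mn t by simp
      thus False using \<open>t' < m\<close> t by simp
    qed
    have "a (\<sigma> (\<rho> j)) \<le> a (\<sigma> t)" by (rule smono[OF t(2) \<rho>n])
    hence "a j \<le> a x" using \<sigma>\<rho>[OF jn] t by simp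
    hence "fr r (a j) \<le> fr r (a x)" by (rule fr_mono)
    moreover have "fr r (a x) \<le> gg r" unfolding gg_def by (rule fr_mono[OF nonQ_le_q[OF xn xQ]])
    ultimately have "fr r (a x) = gg r" using jg by linarith
    thus "x \<in> AA r" using xn xQ by (simp add: AA_def)
  qed
  have "inj_on \<sigma> {m..\<rho> j}"
  proof (rule inj_onI)
    fix x y assume "x \<in> {m..\<rho> j}" "y \<in> {m..\<rho> j}" "\<sigma> x = \<sigma> y"
    thus "x = y" using \<sigma>_inj[of x y] \<rho>n by simp
  qed
  hence "card (\<sigma> ` {m..\<rho> j}) = \<rho> j - m + 1" using m by (simp add: card_image)
  moreover have "card (\<sigma> ` {m..\<rho> j}) \<le> card (AA r)" by (rule card_mono[OF finite_AA sub])
  ultimately show "\<rho> j - m + 1 \<le> card (AA r)" by simp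
qed

lemma w_nonneg: assumes "j < n" "j \<notin> Q" shows "0 \<le> w j"
  unfolding w_def by (rule hw_nonneg) simp

lemma ratio_bound:
  assumes iA: "i \<in> AA r"
  shows "real (card (KK r)) / real (card (ZZ r i)) \<le> real m * (1 / real (card (AA r) + 1) + (\<Sum>j\<in>CC r i. w j))"
proof -
  define k where "k = card (KK r)"
  define \<nu> where "\<nu> = card (NN r i)"
  define \<beta> where "\<beta> = card (AA r)"
  have k1: "1 \<le> k" and km: "k \<le> m" using KK_ge1 KK_lem by (auto simp: k_def)
  have cZ: "card (ZZ r i) = k + \<nu> + 1" using ZZ_card[OF iA] by (simp add: k_def \<nu>_def)
  have cC: "card (CC r i) + \<nu> + 1 = \<beta>" using CN_card[OF iA] by (simp add: \<nu>_def \<beta>_def)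
  have step1: "real k / real (k + \<nu> + 1) \<le> real m / real (\<nu> + 2)"
  proof -
    have "real k * real (\<nu> + 2) \<le> real m * real (k + \<nu> + 1)"
    proof -
      have "real k * real \<nu> \<le> real m * real \<nu>" using km by (intro mult_right_mono) auto
      moreover have "real k \<le> real m * real k" using m1 k1 by simp
      ultimately show ?thesis using km by (simp add: algebra_simps)
    qed
    thus ?thesis by (simp add: divide_simps)
  qed
  define R where "R = (\<lambda>j. \<rho> j - m + 1) ` CC r i"
  have CA: "CC r i \<subseteq> AA r" by (auto simp: CC_def)
  have injR: "inj_on (\<lambda>j. \<rho> j - m + 1) (CC r i)"
  proof (rule inj_onI)
    fix x y assume x: "x \<in> CC r i" and y: "y \<in> CC r i" and e: "\<rho> x - m + 1 = \<rho> y - m + 1"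
    have "m \<le> \<rho> x" "m \<le> \<rho> y" using rank_A(1) x y CA by blast+
    hence "\<rho> x = \<rho> y" using e by simp
    moreover have "x < n" "y < n" using x y CA AA_sub by blast+
    ultimately show "x = y" using \<rho>_inj by blast
  qed
  have Rsub: "R \<subseteq> {1..\<beta>}"
  proof
    fix t assume "t \<in> R"
    then obtain j where j: "j \<in> CC r i" "t = \<rho> j - m + 1" by (auto simp: R_def)
    have "j \<in> AA r" using j CA by blast
    thus "t \<in> {1..\<beta>}" using rank_A[of j r] j by (simp add: \<beta>_def)
  qed
  have cR: "card R = card (CC r i)" unfolding R_def by (rule card_image[OF injR])
  have "1 / real (\<beta> - card R + 1) - 1 / real (\<beta> + 1) \<le> (\<Sum>t\<in>R. hw t)" by (rule hw_sum_lower[OF Rsub])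
  also have "(\<Sum>t\<in>R. hw t) = (\<Sum>j\<in>CC r i. w j)"
    unfolding R_def w_def by (rule sum.reindex[OF injR, unfolded comp_def])
  also have "\<beta> - card R + 1 = \<nu> + 2" using cR cC by simp
  finally have step2: "1 / real (\<nu> + 2) \<le> 1 / real (\<beta> + 1) + (\<Sum>j\<in>CC r i. w j)" by simp
  have "real k / real (card (ZZ r i)) \<le> real m / real (\<nu> + 2)" using step1 cZ by simp
  also have "\<dots> = real m * (1 / real (\<nu> + 2))" by simp
  also have "\<dots> \<le> real m * (1 / real (\<beta> + 1) + (\<Sum>j\<in>CC r i. w j))"
    by (rule mult_left_mono[OF step2]) simp
  finally show ?thesis by (simp add: k_def \<beta>_def)
qed

end

lemma set_integral_sum':
  fixes f :: "'i \<Rightarrow> 'a \<Rightarrow> real"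
  assumes "finite I" "\<And>i. i \<in> I \<Longrightarrow> set_integrable M A (f i)"
  shows "set_integrable M A (\<lambda>x. \<Sum>i\<in>I. f i x) \<and> (LINT x:A|M. (\<Sum>i\<in>I. f i x)) = (\<Sum>i\<in>I. LINT x:A|M. f i x)"
  using assms
proof (induction I rule: finite_induct)
  case empty
  have "set_integrable M A (\<lambda>x. 0::real)" unfolding set_integrable_def by simp
  thus ?case by (simp add: set_lebesgue_integral_def)
next
  case (insert i I)
  have fi: "set_integrable M A (f i)" using insert by simp
  have IH: "set_integrable M A (\<lambda>x. \<Sum>i\<in>I. f i x) \<and> (LINT x:A|M. (\<Sum>i\<in>I. f i x)) = (\<Sum>i\<in>I. LINT x:A|M. f i x)"
    using insert by simp
  have eq: "(\<lambda>x. \<Sum>i\<in>insert i I. f i x) = (\<lambda>x. f i x + (\<Sum>i\<in>I. f i x))"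
    using insert by simp
  show ?case unfolding eq using set_integral_add[OF fi conjunct1[OF IH]] IH insert by simp
qed

context auc begin

lemma pi_avg:
  assumes i: "i < n"
  shows "(\<Sum>\<pi>\<in>{\<pi>. \<pi> permutes {..<n}}. c i r \<pi>) \<le> fact n * (of_bool (i \<in> Q) + (\<Sum>k\<in>Q. of_bool (sep r k i)))
          + of_bool (i \<in> AA r) * (real (card (KK r)) * fact n / real (card (ZZ r i)))"
proof -
  define P where "P = {\<pi>. \<pi> permutes {..<n}}"
  have fP: "finite P" unfolding P_def by (simp add: finite_permutations)
  have cP: "card P = fact n" unfolding P_def by (simp add: card_permutations)
  define X where "X = (of_bool (i \<in> Q) + (\<Sum>k\<in>Q. of_bool (sep r k i)) :: real)"
  have "(\<Sum>\<pi>\<in>P. c i r \<pi>) \<le> (\<Sum>\<pi>\<in>P. X + of_bool (i \<in> AA r \<and> topk (ZZ r i) \<pi> (card (KK r)) i))"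
    by (intro sum_mono) (use win_bound'[OF i] in \<open>auto simp: P_def X_def\<close>)
  also have "\<dots> = fact n * X + (\<Sum>\<pi>\<in>P. of_bool (i \<in> AA r \<and> topk (ZZ r i) \<pi> (card (KK r)) i))"
    by (simp add: sum.distrib cP)
  also have "(\<Sum>\<pi>\<in>P. (of_bool (i \<in> AA r \<and> topk (ZZ r i) \<pi> (card (KK r)) i) :: real))
      \<le> of_bool (i \<in> AA r) * (real (card (KK r)) * fact n / real (card (ZZ r i)))"
  proof (cases "i \<in> AA r")
    case False thus ?thesis by simp
  next
    case True
    have "(\<Sum>\<pi>\<in>P. (of_bool (i \<in> AA r \<and> topk (ZZ r i) \<pi> (card (KK r)) i) :: real))
        = real (card {\<pi>\<in>P. topk (ZZ r i) \<pi> (card (KK r)) i})"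
      using True by (simp add: card_filter_sum[OF fP])
    also have "{\<pi>\<in>P. topk (ZZ r i) \<pi> (card (KK r)) i} = {\<pi>. \<pi> permutes {..<n} \<and> topk (ZZ r i) \<pi> (card (KK r)) i}"
      by (simp add: P_def)
    also have "real (card \<dots>) \<le> real (card (KK r)) * fact n / real (card (ZZ r i))"
    proof -
      have iZ: "i \<in> ZZ r i" by (simp add: ZZ_def)
      have fZ: "finite (ZZ r i)" using finite_subset[OF ZZ_sub[OF i]] by simp
      have "card (ZZ r i) > 0" using iZ fZ card_gt_0_iff by blast
      hence pos: "0 < real (card (ZZ r i))" by simp
      show ?thesis using topk_perm_count[OF ZZ_sub[OF i] iZ, of "card (KK r)"] pos
        by (simp add: divide_simps)
    qed
    finally show ?thesis using True by simp
  qed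
  finally show ?thesis by (simp add: X_def P_def algebra_simps)
qed

definition "Bnd r = 2 * real m + (\<Sum>k\<in>Q. \<Sum>i<n. (of_bool (sep r k i) :: real))
   + real m * (\<Sum>j\<in>{..<n}-Q. w j * (\<Sum>i<n. (of_bool (sep r j i) :: real)))"

lemma bucket_sum:
  "(\<Sum>i\<in>AA r. real (card (KK r)) / real (card (ZZ r i)))
     \<le> real m + real m * (\<Sum>j\<in>{..<n}-Q. w j * (\<Sum>i<n. (of_bool (sep r j i) :: real)))"
proof -
  define \<beta> where "\<beta> = card (AA r)"
  have "(\<Sum>i\<in>AA r. real (card (KK r)) / real (card (ZZ r i)))
      \<le> (\<Sum>i\<in>AA r. real m * (1 / real (\<beta> + 1) + (\<Sum>j\<in>CC r i. w j)))"
  proof (rule sum_mono)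
    fix i assume "i \<in> AA r"
    thus "real (card (KK r)) / real (card (ZZ r i)) \<le> real m * (1 / real (\<beta> + 1) + (\<Sum>j\<in>CC r i. w j))"
      using ratio_bound[of i r] by (simp add: \<beta>_def)
  qed
  also have "\<dots> = real m * (real \<beta> / real (\<beta> + 1)) + real m * (\<Sum>i\<in>AA r. \<Sum>j\<in>CC r i. w j)"
    by (simp add: sum.distrib sum_distrib_left \<beta>_def algebra_simps)
  also have "real m * (real \<beta> / real (\<beta> + 1)) \<le> real m"
  proof -
    have "real \<beta> / real (\<beta> + 1) \<le> 1" by (simp add: divide_simps)
    from mult_left_mono[OF this, of "real m"] show ?thesis by simp
  qed
  also have "(\<Sum>i\<in>AA r. \<Sum>j\<in>CC r i. w j) \<le> (\<Sum>i<n. \<Sum>j\<in>{..<n}-Q. w j * of_bool (sep r j i))"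
  proof -
    have "(\<Sum>j\<in>CC r i. w j) \<le> (\<Sum>j\<in>{..<n}-Q. w j * of_bool (sep r j i))" for i
    proof -
      have sub: "CC r i \<subseteq> {..<n}-Q" using AA_Q AA_sub by (auto simp: CC_def)
      have "(\<Sum>j\<in>CC r i. w j) = (\<Sum>j\<in>CC r i. w j * of_bool (sep r j i))"
        by (intro sum.cong refl) (simp add: CC_def)
      also have "\<dots> \<le> (\<Sum>j\<in>{..<n}-Q. w j * of_bool (sep r j i))"
        using sub by (intro sum_mono2) (auto intro: w_nonneg)
      finally show ?thesis .
    qed
    hence "(\<Sum>i\<in>AA r. \<Sum>j\<in>CC r i. w j) \<le> (\<Sum>i\<in>AA r. \<Sum>j\<in>{..<n}-Q. w j * of_bool (sep r j i))"
      by (intro sum_mono) auto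
    also have "\<dots> \<le> (\<Sum>i<n. \<Sum>j\<in>{..<n}-Q. w j * of_bool (sep r j i))"
      using AA_sub by (intro sum_mono2 sum_nonneg) (auto intro: w_nonneg)
    finally show ?thesis .
  qed
  also have "(\<Sum>i<n. \<Sum>j\<in>{..<n}-Q. w j * (of_bool (sep r j i) :: real))
      = (\<Sum>j\<in>{..<n}-Q. w j * (\<Sum>i<n. (of_bool (sep r j i) :: real)))"
    by (subst sum.swap) (simp only: sum_distrib_left)
  finally show ?thesis by (simp add: mult_left_mono)
qed

end

context auc begin

lemma per_r: "(\<Sum>i<n. \<Sum>\<pi>\<in>{\<pi>. \<pi> permutes {..<n}}. c i r \<pi>) / fact n \<le> Bnd r"
proof -
  define P where "P = {\<pi>. \<pi> permutes {..<n}}"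
  define Y where "Y i = of_bool (i \<in> AA r) * (real (card (KK r)) * fact n / real (card (ZZ r i)))" for i
  have fnz: "(fact n :: real) > 0" by simp
  have "(\<Sum>i<n. \<Sum>\<pi>\<in>P. c i r \<pi>) \<le> (\<Sum>i<n. fact n * (of_bool (i \<in> Q) + (\<Sum>k\<in>Q. of_bool (sep r k i))) + Y i)"
  proof (rule sum_mono)
    fix i assume "i \<in> {..<n}"
    thus "(\<Sum>\<pi>\<in>P. c i r \<pi>) \<le> fact n * (of_bool (i \<in> Q) + (\<Sum>k\<in>Q. of_bool (sep r k i))) + Y i"
      unfolding P_def Y_def by (intro pi_avg) simp
  qed
  also have "\<dots> = fact n * ((\<Sum>i<n. (of_bool (i \<in> Q) :: real)) + (\<Sum>k\<in>Q. \<Sum>i<n. (of_bool (sep r k i) :: real))) + (\<Sum>i<n. Y i)"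
  proof -
    have "(\<Sum>i<n. fact n * (of_bool (i \<in> Q) + (\<Sum>k\<in>Q. of_bool (sep r k i))) + Y i)
        = fact n * ((\<Sum>i<n. (of_bool (i \<in> Q) :: real)) + (\<Sum>i<n. \<Sum>k\<in>Q. (of_bool (sep r k i) :: real))) + (\<Sum>i<n. Y i)"
      by (simp only: sum.distrib sum_distrib_left distrib_left)
    also have "(\<Sum>i<n. \<Sum>k\<in>Q. (of_bool (sep r k i) :: real)) = (\<Sum>k\<in>Q. \<Sum>i<n. (of_bool (sep r k i) :: real))"
      by (rule sum.swap)
    finally show ?thesis .
  qed
  also have "(\<Sum>i<n. (of_bool (i \<in> Q) :: real)) = real m"
  proof -
    have "(\<Sum>i<n. (of_bool (i \<in> Q) :: real)) = real (card ({..<n} \<inter> {i. i \<in> Q}))"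
      by (rule sum_of_bool_eq) simp_all
    also have "{..<n} \<inter> {i. i \<in> Q} = Q" using Q_sub by auto
    finally show ?thesis using card_Q by simp
  qed
  also have "(\<Sum>i<n. Y i) = fact n * (\<Sum>i\<in>AA r. real (card (KK r)) / real (card (ZZ r i)))"
  proof -
    have "(\<Sum>i<n. Y i) = (\<Sum>i\<in>{..<n} \<inter> {i. i \<in> AA r}. real (card (KK r)) * fact n / real (card (ZZ r i)))"
      unfolding Y_def by (rule sum_of_bool_mult_eq) simp
    also have "{..<n} \<inter> {i. i \<in> AA r} = AA r" using AA_sub by auto
    finally show ?thesis by (simp add: sum_distrib_left mult.commute)
  qed
  finally have "(\<Sum>i<n. \<Sum>\<pi>\<in>P. c i r \<pi>) / fact n \<le>
      real m + (\<Sum>k\<in>Q. \<Sum>i<n. (of_bool (sep r k i) :: real)) + (\<Sum>i\<in>AA r. real (card (KK r)) / real (card (ZZ r i)))"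
    using fnz by (simp add: divide_simps algebra_simps)
  also have "\<dots> \<le> Bnd r" using bucket_sum[of r] unfolding Bnd_def by linarith
  finally show ?thesis by (simp add: P_def)
qed

lemma c_meas: "(\<lambda>r. c i r \<pi>) \<in> borel_measurable lborel"
proof -
  define G where "G j r = gt_pi \<pi> (fr r (a i)) i (fr r (l j i)) j" for j r
  have Gm: "Measurable.pred lborel (G j)" for j
    unfolding G_def gt_pi_def by measurable
  have eq: "(n - m \<le> card {j. j < n \<and> j \<noteq> i \<and> G j r}) \<longleftrightarrow>
      (\<exists>J\<in>Pow {..<n}. n - m \<le> card J \<and> (\<forall>j\<in>J. j \<noteq> i \<and> G j r))" for r
  proof
    assume "n - m \<le> card {j. j < n \<and> j \<noteq> i \<and> G j r}"
    thus "\<exists>J\<in>Pow {..<n}. n - m \<le> card J \<and> (\<forall>j\<in>J. j \<noteq> i \<and> G j r)"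
      by (intro bexI[of _ "{j. j < n \<and> j \<noteq> i \<and> G j r}"]) auto
  next
    assume "\<exists>J\<in>Pow {..<n}. n - m \<le> card J \<and> (\<forall>j\<in>J. j \<noteq> i \<and> G j r)"
    then obtain J where J: "J \<subseteq> {..<n}" "n - m \<le> card J" "\<forall>j\<in>J. j \<noteq> i \<and> G j r" by auto
    have "J \<subseteq> {j. j < n \<and> j \<noteq> i \<and> G j r}" using J by auto
    hence "card J \<le> card {j. j < n \<and> j \<noteq> i \<and> G j r}" by (intro card_mono) auto
    thus "n - m \<le> card {j. j < n \<and> j \<noteq> i \<and> G j r}" using J by linarith
  qed
  have pm: "Measurable.pred lborel (\<lambda>r. \<exists>J\<in>Pow {..<n}. n - m \<le> card J \<and> (\<forall>j\<in>J. j \<noteq> i \<and> G j r))"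
    using Gm by (intro pred_intros_finite pred_intros_logic) (auto intro: finite_subset[of _ "{..<n}"])
  have "(\<lambda>r. c i r \<pi>) = (\<lambda>r. if (\<exists>J\<in>Pow {..<n}. n - m \<le> card J \<and> (\<forall>j\<in>J. j \<noteq> i \<and> G j r)) then 1 else 0)"
    unfolding c_def G_def[symmetric] using eq by (intro ext) simp
  also have "\<dots> \<in> borel_measurable lborel" using pm by measurable
  finally show ?thesis .
qed

lemma c_int: "set_integrable lborel {0..<1::real} (\<lambda>r. c i r \<pi>)"
  unfolding set_integrable_def
  by (intro integrableI_bounded_set_indicator[where B=1] c_meas) (auto simp: c_def)

lemma const_int: "set_integrable lborel {0..<1::real} (\<lambda>r. (C::real))"
  unfolding set_integrable_def
  by (intro integrableI_bounded_set_indicator[where B="\<bar>C\<bar>"]) auto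

end

context auc begin

lemma sep_int: "set_integrable lborel {0..<1::real} (\<lambda>r. (of_bool (sep r j i) :: real))"
  unfolding sep_def by (rule sep_integrable)

definition "SS j r = (\<Sum>i<n. (of_bool (sep r j i) :: real))"

lemma SS_int: "set_integrable lborel {0..<1::real} (SS j)"
  and SS_integral: "(LINT r:{0..<1::real}|lborel. SS j r) = (\<Sum>i<n. LINT r:{0..<1::real}|lborel. (of_bool (sep r j i) :: real))"
  using set_integral_sum'[of "{..<n}" lborel "{0..<1::real}" "\<lambda>i r. (of_bool (sep r j i) :: real)"] sep_int
  unfolding SS_def by auto

lemma SS_bound: assumes j: "j < n" shows "(LINT r:{0..<1::real}|lborel. SS j r) \<le> 2 * d"
proof -
  have "(LINT r:{0..<1::real}|lborel. SS j r) \<le> (\<Sum>i<n. 2 * (1 - l j i / a j))"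
    unfolding SS_integral
  proof (rule sum_mono)
    fix i assume "i \<in> {..<n}"
    hence i: "i < n" by simp
    show "(LINT r:{0..<1::real}|lborel. (of_bool (sep r j i) :: real)) \<le> 2 * (1 - l j i / a j)"
      unfolding sep_def by (rule sep_integral[OF l0[OF i j] la[OF i j] apos[OF j]])
  qed
  also have "(\<Sum>i<n. 2 * (1 - l j i / a j)) = 2 * ((\<Sum>i<n. a j - l j i) / a j)"
    using apos[OF j] by (simp add: sum_distrib_left sum_divide_distrib diff_divide_distrib)
  also have "(\<Sum>i<n. a j - l j i) / a j \<le> d"
    using sb[OF j] apos[OF j] by (simp add: divide_le_eq)
  finally show ?thesis by simp
qed

lemma w_sum: "(\<Sum>j\<in>{..<n}-Q. w j) \<le> 1"
proof -
  define R where "R = (\<lambda>j. \<rho> j - m + 1) ` ({..<n} - Q)"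
  have injR: "inj_on (\<lambda>j. \<rho> j - m + 1) ({..<n} - Q)"
  proof (rule inj_onI)
    fix x y assume x: "x \<in> {..<n} - Q" and y: "y \<in> {..<n} - Q" and e: "\<rho> x - m + 1 = \<rho> y - m + 1"
    have "m \<le> \<rho> x" "m \<le> \<rho> y" using nonQ_rho x y by auto
    hence "\<rho> x = \<rho> y" using e by simp
    thus "x = y" using \<rho>_inj x y by auto
  qed
  have Rsub: "R \<subseteq> {1..n-m}"
  proof
    fix t assume "t \<in> R"
    then obtain j where j: "j < n" "j \<notin> Q" "t = \<rho> j - m + 1" by (auto simp: R_def)
    have "m \<le> \<rho> j" "\<rho> j < n" using nonQ_rho[OF j(1,2)] \<rho>_lt[OF j(1)] by auto
    thus "t \<in> {1..n-m}" using j(3) by auto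
  qed
  have "(\<Sum>j\<in>{..<n}-Q. w j) = (\<Sum>t\<in>R. hw t)"
    unfolding R_def w_def by (rule sum.reindex[OF injR, unfolded comp_def, symmetric])
  also have "\<dots> \<le> 1" by (rule hw_sum_le1[OF Rsub])
  finally show ?thesis .
qed

lemma Bnd_int: "set_integrable lborel {0..<1::real} Bnd"
  and Bnd_bound: "(LINT r:{0..<1::real}|lborel. Bnd r) \<le> 2 * real m + 4 * d * real m"
proof -
  have S1: "set_integrable lborel {0..<1::real} (\<lambda>r. \<Sum>k\<in>Q. SS k r) \<and>
      (LINT r:{0..<1::real}|lborel. (\<Sum>k\<in>Q. SS k r)) = (\<Sum>k\<in>Q. LINT r:{0..<1::real}|lborel. SS k r)"
    by (rule set_integral_sum'[OF finite_Q SS_int])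
  have wS: "set_integrable lborel {0..<1::real} (\<lambda>r. w j * SS j r)" for j
    by (rule set_integrable_mult_right) (rule SS_int)
  have S2: "set_integrable lborel {0..<1::real} (\<lambda>r. \<Sum>j\<in>{..<n}-Q. w j * SS j r) \<and>
      (LINT r:{0..<1::real}|lborel. (\<Sum>j\<in>{..<n}-Q. w j * SS j r)) = (\<Sum>j\<in>{..<n}-Q. LINT r:{0..<1::real}|lborel. w j * SS j r)"
    by (rule set_integral_sum'[OF _ wS]) simp
  have mS2: "set_integrable lborel {0..<1::real} (\<lambda>r. real m * (\<Sum>j\<in>{..<n}-Q. w j * SS j r))"
    by (rule set_integrable_mult_right) (use S2 in blast)
  have c2: "set_integrable lborel {0..<1::real} (\<lambda>r. 2 * real m)" by (rule const_int)
  have Beq: "Bnd = (\<lambda>r. 2 * real m + (\<Sum>k\<in>Q. SS k r) + real m * (\<Sum>j\<in>{..<n}-Q. w j * SS j r))"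
    by (intro ext) (simp add: Bnd_def SS_def)
  have i12: "set_integrable lborel {0..<1::real} (\<lambda>r. 2 * real m + (\<Sum>k\<in>Q. SS k r))"
    by (rule set_integral_add(1)[OF c2]) (use S1 in blast)
  show "set_integrable lborel {0..<1::real} Bnd"
    unfolding Beq by (rule set_integral_add(1)[OF i12 mS2])
  have e0: "(LINT r:{0..<1::real}|lborel. Bnd r) = (LINT r:{0..<1::real}|lborel. 2 * real m + (\<Sum>k\<in>Q. SS k r))
      + (LINT r:{0..<1::real}|lborel. real m * (\<Sum>j\<in>{..<n}-Q. w j * SS j r))"
    unfolding Beq by (rule set_integral_add(2)[OF i12 mS2])
  have e1: "(LINT r:{0..<1::real}|lborel. 2 * real m + (\<Sum>k\<in>Q. SS k r))
      = (LINT r:{0..<1::real}|lborel. 2 * real m) + (\<Sum>k\<in>Q. LINT r:{0..<1::real}|lborel. SS k r)"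
    unfolding set_integral_add(2)[OF c2 conjunct1[OF S1]] conjunct2[OF S1] ..
  have e2: "(LINT r:{0..<1::real}|lborel. 2 * real m) = 2 * real m"
    by (subst set_integral_const) auto
  have e3: "(LINT r:{0..<1::real}|lborel. real m * (\<Sum>j\<in>{..<n}-Q. w j * SS j r))
      = real m * (\<Sum>j\<in>{..<n}-Q. w j * (LINT r:{0..<1::real}|lborel. SS j r))"
    using S2 by (simp add: set_integral_mult_right)
  have b1: "(\<Sum>k\<in>Q. LINT r:{0..<1::real}|lborel. SS k r) \<le> 2 * d * real m"
  proof -
    have "(\<Sum>k\<in>Q. LINT r:{0..<1::real}|lborel. SS k r) \<le> (\<Sum>k\<in>Q. 2 * d)"
      by (intro sum_mono SS_bound) (use Q_sub in auto)
    also have "(\<Sum>k\<in>Q. 2 * d) = 2 * d * real m" using card_Q by simp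
    finally show ?thesis .
  qed
  have b2: "(\<Sum>j\<in>{..<n}-Q. w j * (LINT r:{0..<1::real}|lborel. SS j r)) \<le> 2 * d"
  proof -
    have "(\<Sum>j\<in>{..<n}-Q. w j * (LINT r:{0..<1::real}|lborel. SS j r)) \<le> (\<Sum>j\<in>{..<n}-Q. w j * (2 * d))"
      by (intro sum_mono mult_left_mono SS_bound w_nonneg) auto
    also have "(\<Sum>j\<in>{..<n}-Q. w j * (2 * d)) = (\<Sum>j\<in>{..<n}-Q. w j) * (2 * d)"
      by (simp add: sum_distrib_right)
    also have "\<dots> \<le> 1 * (2 * d)" using w_sum d0 by (intro mult_right_mono) auto
    finally show ?thesis by simp
  qed
  have b3': "real m * (\<Sum>j\<in>{..<n}-Q. w j * (LINT r:{0..<1::real}|lborel. SS j r)) \<le> real m * (2 * d)"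
    by (rule mult_left_mono[OF b2]) simp
  have b3: "real m * (\<Sum>j\<in>{..<n}-Q. w j * (LINT r:{0..<1::real}|lborel. SS j r)) \<le> 2 * (d * real m)"
    using b3' by (simp add: algebra_simps)
  have b1': "(\<Sum>k\<in>Q. LINT r:{0..<1::real}|lborel. SS k r) \<le> 2 * (d * real m)"
    using b1 by (simp add: algebra_simps)
  show "(LINT r:{0..<1::real}|lborel. Bnd r) \<le> 2 * real m + 4 * d * real m"
  proof -
    have "(LINT r:{0..<1::real}|lborel. Bnd r) \<le> 2 * real m + 4 * (d * real m)"
      using e0 e1 e2 e3 b1' b3 by linarith
    thus ?thesis by (simp add: algebra_simps)
  qed
qed

end

context auc begin

theorem abs_main:
  "(\<Sum>i<n. (\<Sum>\<pi>\<in>{\<pi>. \<pi> permutes {..<n}}. LINT r:{0..<1::real}|lborel. c i r \<pi>) / fact n)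
     \<le> 2 * real m + 4 * d * real m"
proof -
  define P where "P = {\<pi>. \<pi> permutes {..<n}}"
  have fP: "finite P" unfolding P_def by (simp add: finite_permutations)
  define T where "T r = (\<Sum>i<n. \<Sum>\<pi>\<in>P. c i r \<pi>)" for r
  have inner: "set_integrable lborel {0..<1::real} (\<lambda>r. \<Sum>\<pi>\<in>P. c i r \<pi>) \<and>
      (LINT r:{0..<1::real}|lborel. (\<Sum>\<pi>\<in>P. c i r \<pi>)) = (\<Sum>\<pi>\<in>P. LINT r:{0..<1::real}|lborel. c i r \<pi>)" for i
    by (rule set_integral_sum'[OF fP c_int])
  have outer: "set_integrable lborel {0..<1::real} T \<and>
      (LINT r:{0..<1::real}|lborel. T r) = (\<Sum>i<n. LINT r:{0..<1::real}|lborel. (\<Sum>\<pi>\<in>P. c i r \<pi>))"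
    unfolding T_def by (rule set_integral_sum') (use inner in auto)
  have Tdiv: "set_integrable lborel {0..<1::real} (\<lambda>r. T r / fact n)"
    using outer by (subst set_integrable_mult_divide_iff) auto
  have "(\<Sum>i<n. (\<Sum>\<pi>\<in>P. LINT r:{0..<1::real}|lborel. c i r \<pi>) / fact n)
      = (\<Sum>i<n. \<Sum>\<pi>\<in>P. LINT r:{0..<1::real}|lborel. c i r \<pi>) / fact n"
    by (simp add: sum_divide_distrib)
  also have "\<dots> = (LINT r:{0..<1::real}|lborel. T r) / fact n"
    using outer inner by simp
  also have "\<dots> = (LINT r:{0..<1::real}|lborel. T r / fact n)"
    by (simp add: set_integral_divide_zero)
  also have "\<dots> \<le> (LINT r:{0..<1::real}|lborel. Bnd r)"
    by (rule set_integral_mono[OF Tdiv Bnd_int]) (use per_r in \<open>simp add: T_def P_def\<close>)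
  also have "\<dots> \<le> 2 * real m + 4 * d * real m" by (rule Bnd_bound)
  finally show ?thesis by (simp add: P_def)
qed

end

theorem mainTheorem16:
  fixes n m d :: nat
    and S :: "nat \<Rightarrow> real set"
    and v :: "nat \<Rightarrow> (nat \<Rightarrow> real) \<Rightarrow> real"
    and s :: "nat \<Rightarrow> real"
  assumes "1 \<le> m" and "m < n"
    and "1 \<le> d" and "d \<le> n"
    and "\<And>i t. i < n \<Longrightarrow> t \<in> PiE {..<n} S \<Longrightarrow> v i t > 0"
    and "\<And>i. i < n \<Longrightarrow> self_bounding n S (real d) (v i)"
    and "s \<in> PiE {..<n} S"
  shows "(\<Sum>i<n. exp_cm n S v m s i) \<le> 4 * (real d + 1) * real m
       \<and> (\<Sum>i<n. exp_cm n S v m s i / (4 * (real d + 1))) \<le> real m"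
proof -
  note m1 = assms(1) and mn = assms(2) and d1 = assms(3) and vpos = assms(5) and sbd = assms(6) and sP = assms(7)
  define a where "a j = v j s" for j
  define l where "l j i = lower_est S v j i s" for j i
  obtain \<sigma> where sb1: "bij_betw \<sigma> {..<n} {..<n}" and sb2: "\<And>t t'. t \<le> t' \<Longrightarrow> t' < n \<Longrightarrow> a (\<sigma> t') \<le> a (\<sigma> t)"
    using exists_rank[of n a] by blast
  have upd: "s(i := x) \<in> PiE {..<n} S" if "i < n" "x \<in> S i" for i x
  proof -
    have "s(i := x) \<in> PiE (insert i {..<n}) S" by (rule PiE_fun_upd[OF that(2) sP])
    thus ?thesis using that(1) by (simp add: insert_absorb)
  qed
  have sne: "s i \<in> S i" if "i < n" for i using sP that by (auto simp: PiE_iff)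
  have l0: "0 \<le> l j i" if "i < n" "j < n" for i j
  proof -
    have "0 \<le> (INF x\<in>S i. v j (s(i := x)))"
    proof (rule cINF_greatest)
      show "S i \<noteq> {}" using sne[OF that(1)] by blast
      fix x assume "x \<in> S i"
      show "0 \<le> v j (s(i := x))" using vpos[OF that(2) upd[OF that(1) \<open>x \<in> S i\<close>]] by simp
    qed
    thus ?thesis by (simp add: l_def lower_est_def)
  qed
  have la: "l j i \<le> a j" if "i < n" "j < n" for i j
  proof -
    have bdd: "bdd_below ((\<lambda>x. v j (s(i := x))) ` S i)"
    proof (rule bdd_belowI2[where m=0])
      fix x assume "x \<in> S i"
      show "0 \<le> v j (s(i := x))" using vpos[OF that(2) upd[OF that(1) \<open>x \<in> S i\<close>]] by simp
    qed
    have "(INF x\<in>S i. v j (s(i := x))) \<le> v j (s(i := s i))"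
      by (rule cINF_lower[OF bdd sne[OF that(1)]])
    thus ?thesis by (simp add: l_def lower_est_def a_def)
  qed
  have sb: "(\<Sum>i<n. a j - l j i) \<le> real d * a j" if "j < n" for j
    using sbd[OF that] sP unfolding self_bounding_def by (simp add: a_def l_def lower_est_def)
  interpret auc n m "real d" a l \<sigma>
    using m1 mn vpos sP l0 la sb sb1 sb2 by unfold_locales (auto simp: a_def)
  have eq: "exp_cm n S v m s i = (\<Sum>\<pi>\<in>{\<pi>. \<pi> permutes {..<n}}. LINT r:{0..<1::real}|lborel. c i r \<pi>) / fact n" for i
    unfolding exp_cm_def cm_def c_def a_def l_def ..
  have main: "(\<Sum>i<n. exp_cm n S v m s i) \<le> 2 * real m + 4 * real d * real m"
    using abs_main by (simp add: eq)
  have first: "(\<Sum>i<n. exp_cm n S v m s i) \<le> 4 * (real d + 1) * real m"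
    using main by (simp add: algebra_simps)
  moreover have "(\<Sum>i<n. exp_cm n S v m s i / (4 * (real d + 1))) \<le> real m"
  proof -
    have pos: "0 < 4 * (real d + 1)" by simp
    have "(\<Sum>i<n. exp_cm n S v m s i / (4 * (real d + 1))) = (\<Sum>i<n. exp_cm n S v m s i) / (4 * (real d + 1))"
      by (simp add: sum_divide_distrib)
    also have "\<dots> \<le> real m" using first pos by (simp add: divide_le_eq algebra_simps)
    finally show ?thesis .
  qed
  ultimately show ?thesis by blast
qed


end
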